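(* For real $0\le x<1$, $$\log\mathcal C_2\left(\frac x2\right)=\frac x2 \log(2\pi)+\log\sqrt\pi-\frac12\log\left(\cos\frac{\pi x}{2}\right)+\log\frac{G_{\mathrm B} \left(\frac12-\frac x{2}\right)}{G_{\mathrm B} \left(\frac32+\frac x2\right)}.$$
   Context: $G_{\mathrm B}$ denotes the Barnes $G$-function ($G_{\mathrm B}(z+1)=\Gamma(z)G_{\mathrm B}(z)$, $G_{\mathrm B}(1)=1$), positive on $(0,\infty)$. For real $|x|<\frac12$, $\mathcal C_2(x)=\prod_{n\ge1,\ n\text{ odd}}\left\{\left(\frac{1-\frac{x}{n/2}}{1+\frac{x}{n/2}}\right)^{n/2}e^{2x}\right\}$ (the double cosine function of Kurokawa–Koyama; a convergent positive product), and $\log$ is the real logarithm. *)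

theory Defs
  imports "HOL-Analysis.Analysis"
begin

text \<open>Used for arguments w > 0 (z = w - 1 > -1), where all factors are positive.\<close>
definition barnesG :: "real \<Rightarrow> real" where
  "barnesG w = (let z = w - 1 in
     (2 * pi) powr (z / 2) * exp (- (z + (1 + euler_mascheroni) * z\<^sup>2) / 2) *
     (\<Prod>k. (1 + z / real (Suc k)) ^ (Suc k) * exp (- z + z\<^sup>2 / (2 * real (Suc k)))))"

text \<open>Kurokawa--Koyama double cosine C_2(x) for real |x| < 1/2: product over odd n = 2k+1.\<close>
definition doubleCosine2 :: "real \<Rightarrow> real" where
  "doubleCosine2 x = (\<Prod>k. let n = real (2 * k + 1) in
     ((1 - x / (n / 2)) / (1 + x / (n / 2))) powr (n / 2) * exp (2 * x))"

end

theory Submission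
  imports Defs
begin


lemma H1:
  fixes t :: real assumes "0 \<le> t" "t < 1"
  shows "2 * t \<le> ln (1 + t) - ln (1 - t)"
proof -
  have "(\<lambda>v. ln (1 + v) - ln (1 - v) - 2 * v) 0 \<le> (\<lambda>v. ln (1 + v) - ln (1 - v) - 2 * v) t"
  proof (rule DERIV_nonneg_imp_nondecreasing[OF assms(1)])
    fix v :: real assume v: "0 \<le> v" "v \<le> t"
    hence v1: "v < 1" using assms by linarith
    have "((\<lambda>v. ln (1 + v) - ln (1 - v) - 2 * v) has_real_derivative
        (1 / (1 + v) + 1 / (1 - v) - 2)) (at v)"
      using v v1 by (auto intro!: derivative_eq_intros)
    moreover have "1 / (1 + v) + 1 / (1 - v) - 2 \<ge> 0"
    proof -
      have p1: "1 + v > 0" "1 - v > 0" "1 - v * v > 0" using v v1 by (auto simp: mult_le_one) (metis abs_of_nonneg abs_square_less_1 power2_eq_square)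
      have "1 / (1 + v) + 1 / (1 - v) - 2 = 2 * v^2 / ((1+v)*(1-v))"
        using p1 by (simp add: field_simps power2_eq_square)
      also have "\<dots> \<ge> 0" using v v1 by (intro divide_nonneg_pos) auto
      finally show ?thesis .
    qed
    ultimately show "\<exists>y. ((\<lambda>v. ln (1 + v) - ln (1 - v) - 2 * v) has_real_derivative y) (at v) \<and> 0 \<le> y"
      by blast
  qed
  thus ?thesis by simp
qed

lemma H2:
  fixes t :: real assumes "0 \<le> t" "t < 1"
  shows "ln (1 + t) - ln (1 - t) \<le> 2 * t + (2/3) * t^3 / (1 - t^2)"
proof -
  have tt: "t * t < 1" using assms by (metis abs_of_nonneg abs_square_less_1 power2_eq_square)
  define D where "D = 1 - t^2"
  have D: "D > 0" using tt by (simp add: D_def power2_eq_square)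
  let ?f = "\<lambda>v::real. 2 * v + (2/3) * v^3 / D - (ln (1 + v) - ln (1 - v))"
  have "?f 0 \<le> ?f t"
  proof (rule DERIV_nonneg_imp_nondecreasing[OF assms(1)])
    fix v :: real assume v: "0 \<le> v" "v \<le> t"
    hence v1: "v < 1" using assms by linarith
    have p1: "1 + v > 0" "1 - v > 0" using v v1 by auto
    have d: "(?f has_real_derivative (2 + 2 * v^2 / D - (1 / (1 + v) + 1 / (1 - v)))) (at v)"
      using p1 D by (auto intro!: derivative_eq_intros simp: power2_eq_square)
    have vv: "v * v \<le> t * t" using v by (simp add: mult_mono)
    have e: "1 / (1 + v) + 1 / (1 - v) = 2 / ((1 + v) * (1 - v))"
      using p1 by (simp add: field_simps)
    have p2: "1 - v * v > 0" using vv tt by linarith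
    have "2 / ((1 + v) * (1 - v)) = 2 + 2 * v^2 / ((1 + v) * (1 - v))"
      using p1 p2 by (simp add: field_simps power2_eq_square)
    moreover have "2 * v^2 / ((1 + v) * (1 - v)) \<le> 2 * v^2 / D"
    proof (rule divide_left_mono)
      show "D \<le> (1 + v) * (1 - v)" using vv by (simp add: D_def power2_eq_square algebra_simps)
      show "0 < (1 + v) * (1 - v) * D" using p1 D by simp
    qed simp
    ultimately have "0 \<le> 2 + 2 * v^2 / D - (1 / (1 + v) + 1 / (1 - v))" using e by linarith
    thus "\<exists>y. (?f has_real_derivative y) (at v) \<and> 0 \<le> y" using d by blast
  qed
  thus ?thesis by (simp add: D_def)
qed

lemma I0:
  fixes u :: real assumes "0 \<le> u"
  shows "u - u^2/2 \<le> ln (1 + u)"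
proof -
  let ?f = "\<lambda>v::real. ln (1 + v) - (v - v^2/2)"
  have "?f 0 \<le> ?f u"
  proof (rule DERIV_nonneg_imp_nondecreasing[OF assms(1)])
    fix v :: real assume v: "0 \<le> v" "v \<le> u"
    have p1: "1 + v > 0" using v by auto
    have d: "(?f has_real_derivative (1 / (1 + v) - (1 - v))) (at v)"
      using p1 by (auto intro!: derivative_eq_intros simp: power2_eq_square)
    have "1 / (1 + v) - (1 - v) = v^2 / (1 + v)"
      using p1 by (simp add: field_simps power2_eq_square)
    also have "\<dots> \<ge> 0" using p1 by simp
    finally show "\<exists>y. (?f has_real_derivative y) (at v) \<and> 0 \<le> y" using d by blast
  qed
  thus ?thesis by simp
qed

lemma I1:
  fixes u :: real assumes "0 \<le> u"
  shows "ln (1 + u) \<le> u - u^2/2 + u^3/3"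
proof -
  let ?f = "\<lambda>v::real. (v - v^2/2 + v^3/3) - ln (1 + v)"
  have "?f 0 \<le> ?f u"
  proof (rule DERIV_nonneg_imp_nondecreasing[OF assms(1)])
    fix v :: real assume v: "0 \<le> v" "v \<le> u"
    have p1: "1 + v > 0" using v by auto
    have d: "(?f has_real_derivative (1 - v + v^2 - 1 / (1 + v))) (at v)"
      using p1 by (auto intro!: derivative_eq_intros simp: power2_eq_square)
    have "1 - v + v^2 - 1 / (1 + v) = v^3 / (1 + v)"
      using p1 by (simp add: field_simps power2_eq_square power3_eq_cube)
    also have "\<dots> \<ge> 0" using p1 v by simp
    finally show "\<exists>y. (?f has_real_derivative y) (at v) \<and> 0 \<le> y" using d by blast
  qed
  thus ?thesis by simp
qed



definition LF :: "nat \<Rightarrow> real" where "LF n = (\<Sum>j=1..n. ln (real j))"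
definition sS :: "nat \<Rightarrow> real" where "sS n = LF n - (real n + 1/2) * ln (real n) + real n"

lemma st_step:
  assumes "n \<ge> 1"
  shows "0 \<le> sS n - sS (Suc n) \<and> sS n - sS (Suc n) \<le> 1/(12 * real n) - 1/(12 * real (Suc n))"
proof -
  have n0: "real n > 0" using assms by simp
  have e1: "sS n - sS (Suc n) = (real n + 1/2) * (ln (real n + 1) - ln (real n)) - 1"
    by (simp add: sS_def LF_def algebra_simps)
  define t where "t = 1 / (2 * real n + 1)"
  have t0: "0 \<le> t" "t < 1" using n0 by (auto simp: t_def)
  have "1 + t = (2 * (real n + 1)) / (2 * real n + 1)" using n0 by (simp add: t_def field_simps)
  hence h1: "ln (1 + t) = ln 2 + ln (real n + 1) - ln (2 * real n + 1)"
    using n0 by (simp only: ln_div ln_mult) (auto simp: ln_div ln_mult)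
  have "1 - t = (2 * real n) / (2 * real n + 1)" using n0 by (simp add: t_def field_simps)
  hence h2: "ln (1 - t) = ln 2 + ln (real n) - ln (2 * real n + 1)"
    using n0 by (simp only: ln_div ln_mult) (auto simp: ln_div ln_mult)
  have h: "ln (1 + t) - ln (1 - t) = ln (real n + 1) - ln (real n)"
    using h1 h2 by simp
  have a1: "(real n + 1/2) * (2 * t) = 1" using n0 by (simp add: t_def field_simps)
  have tpos: "t > 0" using n0 by (simp add: t_def)
  have q0: "1 - t^2 = 4 * real n * (real n + 1) * t^2"
  proof -
    have "(2 * real n + 1) * t = 1" using n0 by (simp add: t_def)
    hence "((2 * real n + 1) * t)^2 = 1" by simp
    hence "(4 * real n * (real n + 1) + 1) * t^2 = 1" by (simp add: power_mult_distrib power2_eq_square algebra_simps)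
    thus ?thesis by (simp add: algebra_simps)
  qed
  have q1: "t^3 / (1 - t^2) = t / (4 * real n * (real n + 1))"
    unfolding q0 using tpos n0 by (simp add: power2_eq_square power3_eq_cube)
  have a2: "(real n + 1/2) * ((2/3) * t^3 / (1 - t^2)) = 1/(12 * real n) - 1/(12 * real (Suc n))"
  proof -
    have "(real n + 1/2) * ((2/3) * t^3 / (1 - t^2)) = ((real n + 1/2) * (2 * t)) / (12 * real n * (real n + 1))"
      unfolding times_divide_eq_right[symmetric] q1 by (simp add: field_simps)
    also have "\<dots> = 1 / (12 * real n * (real n + 1))" by (simp only: a1)
    also have "\<dots> = 1/(12 * real n) - 1/(12 * real (Suc n))"
      using n0 by (simp add: field_simps)
    finally show ?thesis .
  qed
  have p: "real n + 1/2 > 0" using n0 by simp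
  have "1 \<le> (real n + 1/2) * (ln (real n + 1) - ln (real n))"
    using mult_left_mono[OF H1[OF t0] less_imp_le[OF p]] a1 h by simp
  moreover have "(real n + 1/2) * (ln (real n + 1) - ln (real n)) \<le> 1 + (1/(12 * real n) - 1/(12 * real (Suc n)))"
    using mult_left_mono[OF H2[OF t0] less_imp_le[OF p]] a1 a2 h by (simp add: distrib_left)
  ultimately show ?thesis using e1 by linarith
qed

lemma st_tele:
  assumes "n \<ge> 1"
  shows "0 \<le> sS n - sS (n + m) \<and> sS n - sS (n + m) \<le> 1/(12 * real n) - 1/(12 * real (n + m))"
proof (induction m)
  case 0 then show ?case by simp
next
  case (Suc m)
  have "n + m \<ge> 1" using assms by simp
  from st_step[OF this] Suc show ?case by simp
qed

lemma st_lim: "(\<lambda>K. sS (2 * K) - sS K) \<longlonglongrightarrow> 0"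
proof (rule Lim_null_comparison)
  show "\<forall>\<^sub>F K in sequentially. norm (sS (2 * K) - sS K) \<le> 1 / (12 * real K)"
    using eventually_ge_at_top[of "1::nat"]
  proof eventually_elim
    case (elim K)
    from st_tele[OF elim, of K] have "0 \<le> sS K - sS (K + K)" "sS K - sS (K + K) \<le> 1/(12 * real K) - 1/(12 * real (K + K))"
      by auto
    moreover have "1/(12 * real (K + K)) \<ge> 0" by simp
    ultimately have "\<bar>sS (K + K) - sS K\<bar> \<le> 1/(12 * real K)" by (auto simp: abs_le_iff)
    moreover have "2 * K = K + K" by simp
    ultimately show ?case by (simp only: real_norm_def)
  qed
  have L: "(\<lambda>K. 1/12 * inverse (real K)) \<longlonglongrightarrow> 1/12 * 0"
    by (intro tendsto_intros lim_inverse_n)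
  have e: "(\<lambda>K. 1/12 * inverse (real K)) = (\<lambda>K. 1 / (12 * real K))"
    by (simp add: inverse_eq_divide)
  show "(\<lambda>K. 1 / (12 * real K)) \<longlonglongrightarrow> 0" using L[unfolded e mult_zero_right] .
qed

lemma odd_ln_sum: "(\<Sum>k<K. ln (real (2*k+1))) = LF (2*K) - real K * ln 2 - LF K"
proof (induction K)
  case 0 then show ?case by (simp add: LF_def)
next
  case (Suc K)
  have "LF (2 * Suc K) = LF (2*K) + ln (real (2*K+1)) + ln (real (2*K+2))"
    by (simp add: LF_def)
  moreover have "ln (real (2*K+2)) = ln 2 + ln (real (Suc K))"
  proof -
    have "real (2*K+2) = 2 * real (Suc K)" by simp
    thus ?thesis by (simp only: ln_mult) (simp add: ln_mult)
  qed
  moreover have "LF (Suc K) = LF K + ln (real (Suc K))" by (simp add: LF_def)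
  moreover have "(\<Sum>k<Suc K. ln (real (2*k+1))) = (\<Sum>k<K. ln (real (2*k+1))) + ln (real (2*K+1))"
    by (simp only: sum.lessThan_Suc)
  moreover have "real (Suc K) * ln 2 = real K * ln 2 + ln 2" by (simp add: algebra_simps)
  ultimately show ?case using Suc by linarith
qed

lemma K_ln_lim:
  fixes c :: real assumes "c > 0"
  shows "(\<lambda>K. real K * ln (1 + c / real K)) \<longlonglongrightarrow> c"
proof (rule tendsto_sandwich)
  show "\<forall>\<^sub>F K in sequentially. c - c^2 / (2 * real K) \<le> real K * ln (1 + c / real K)"
    using eventually_ge_at_top[of "1::nat"]
  proof eventually_elim
    case (elim K)
    hence K: "real K > 0" by simp
    have "c / real K - (c / real K)^2 / 2 \<le> ln (1 + c / real K)"
      using I0[of "c / real K"] assms K by simp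
    from mult_left_mono[OF this less_imp_le[OF K]]
    have "real K * (c / real K - (c / real K)^2 / 2) \<le> real K * ln (1 + c / real K)" .
    moreover have "real K * (c / real K - (c / real K)^2 / 2) = c - c^2 / (2 * real K)"
      using K by (simp add: field_simps power2_eq_square)
    ultimately show ?case by simp
  qed
  show "\<forall>\<^sub>F K in sequentially. real K * ln (1 + c / real K) \<le> c"
    using eventually_ge_at_top[of "1::nat"]
  proof eventually_elim
    case (elim K)
    hence K: "real K > 0" by simp
    have "ln (1 + c / real K) \<le> c / real K"
      using ln_add_one_self_le_self[of "c / real K"] assms K by simp
    from mult_left_mono[OF this less_imp_le[OF K]] show ?case
      using K by simp
  qed
  have L: "(\<lambda>K. c - c^2/2 * inverse (real K)) \<longlonglongrightarrow> c - c^2/2 * 0"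
    by (intro tendsto_intros lim_inverse_n)
  have e: "(\<lambda>K. c - c^2/2 * inverse (real K)) = (\<lambda>K. c - c^2 / (2 * real K))"
    by (simp add: inverse_eq_divide)
  show "(\<lambda>K. c - c^2 / (2 * real K)) \<longlonglongrightarrow> c" using L[unfolded e mult_zero_right diff_zero] .
  show "(\<lambda>K. c) \<longlonglongrightarrow> c" by simp
qed



lemma prod_split_even_odd:
  fixes f :: "nat \<Rightarrow> real"
  shows "(\<Prod>k=1..2*K. f k) = (\<Prod>j=1..K. f (2*j)) * (\<Prod>k<K. f (2*k+1))"
proof (induction K)
  case 0 then show ?case by simp
next
  case (Suc K)
  have "(\<Prod>k=1..2*Suc K. f k) = (\<Prod>k=1..2*K. f k) * f (2*K+1) * f (2*K+2)"
  proof -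
    have "2 * Suc K = Suc (Suc (2*K))" by simp
    hence "(\<Prod>k=1..2*Suc K. f k) = (\<Prod>k=1..Suc (Suc (2*K)). f k)" by simp
    also have "\<dots> = (\<Prod>k=1..2*K. f k) * f (Suc (2*K)) * f (Suc (Suc (2*K)))"
      by (simp add: prod.cl_ivl_Suc)
    finally show ?thesis by (simp add: numeral_2_eq_2)
  qed
  also have "\<dots> = (\<Prod>j=1..Suc K. f (2*j)) * (\<Prod>k<Suc K. f (2*k+1))"
    using Suc by (simp add: prod.cl_ivl_Suc algebra_simps numeral_2_eq_2)
  finally show ?case .
qed

lemma cos_prod:
  fixes x :: real assumes x: "0 \<le> x" "x < 1"
  shows "(\<lambda>K. \<Prod>k<K. 1 - x^2 / (real (2*k+1))^2) \<longlonglongrightarrow> cos (pi * x / 2)"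
proof (cases "x = 0")
  case True then show ?thesis by simp
next
  case False
  hence xp: "x > 0" using x by simp
  define P where "P y N = (\<Prod>k=1..N. 1 - y^2 / (real k)^2)" for y :: real and N :: nat
  have Ppos: "P (x/2) N > 0" for N
    unfolding P_def
  proof (intro prod_pos ballI)
    fix k assume "k \<in> {1..N}"
    hence k: "real k \<ge> 1" by simp
    have "x * x < 1 * 1" using x by (intro mult_strict_mono') auto
    hence "(x/2)^2 < 1" by (simp add: power2_eq_square)
    also have "1 \<le> (real k)^2" using k by simp
    finally have "(x/2)^2 / (real k)^2 < 1" using k by simp
    thus "0 < 1 - (x/2)^2 / (real k)^2" by simp
  qed
  have split: "P x (2*K) = P (x/2) K * (\<Prod>k<K. 1 - x^2 / (real (2*k+1))^2)" for K
  proof -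
    have "P x (2*K) = (\<Prod>j=1..K. 1 - x^2 / (real (2*j))^2) * (\<Prod>k<K. 1 - x^2 / (real (2*k+1))^2)"
      unfolding P_def by (rule prod_split_even_odd)
    moreover have "(\<Prod>j=1..K. 1 - x^2 / (real (2*j))^2) = P (x/2) K"
      unfolding P_def by (intro prod.cong refl) (simp add: power2_eq_square field_simps)
    ultimately show ?thesis by simp
  qed
  have q: "(\<Prod>k<K. 1 - x^2 / (real (2*k+1))^2) = P x (2*K) / P (x/2) K" for K
    using split[of K] Ppos[of K] by (simp add: field_simps)
  have l1: "(\<lambda>K. P x (2*K)) \<longlonglongrightarrow> sin (pi * x) / (pi * x)"
  proof -
    have "(\<lambda>N. P x N) \<longlonglongrightarrow> sin (pi * x) / (pi * x)"
      unfolding P_def using sin_product_formula_real'[of x] False by simp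
    from LIMSEQ_subseq_LIMSEQ[OF this, of "\<lambda>K. 2*K"] show ?thesis
      by (simp add: strict_mono_def o_def)
  qed
  have l2: "(\<lambda>K. P (x/2) K) \<longlonglongrightarrow> sin (pi * (x/2)) / (pi * (x/2))"
    unfolding P_def using sin_product_formula_real'[of "x/2"] False by simp
  have s2: "sin (pi * (x/2)) > 0"
    using xp x by (intro sin_gt_zero) auto
  have nz: "sin (pi * (x/2)) / (pi * (x/2)) \<noteq> 0" using s2 xp by simp
  have "(\<lambda>K. P x (2*K) / P (x/2) K) \<longlonglongrightarrow> (sin (pi * x) / (pi * x)) / (sin (pi * (x/2)) / (pi * (x/2)))"
    by (rule tendsto_divide[OF l1 l2 nz])
  moreover have "(sin (pi * x) / (pi * x)) / (sin (pi * (x/2)) / (pi * (x/2))) = cos (pi * x / 2)"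
  proof -
    have "sin (pi * x) = 2 * sin (pi * (x/2)) * cos (pi * (x/2))"
      using sin_double[of "pi * (x/2)"] by simp
    thus ?thesis using s2 xp by (simp add: field_simps)
  qed
  ultimately have L: "(\<lambda>K. P x (2*K) / P (x/2) K) \<longlonglongrightarrow> cos (pi * x / 2)" by simp
  have e: "(\<lambda>K. \<Prod>k<K. 1 - x^2 / (real (2*k+1))^2) = (\<lambda>K. P x (2*K) / P (x/2) K)"
    using q by (intro ext) simp
  show ?thesis unfolding e by (rule L)
qed



lemma prodinf_ln_sums:
  fixes f :: "nat \<Rightarrow> real"
  assumes pos: "\<And>k. f k > 0" and s: "(\<lambda>k. ln (f k)) sums S"
  shows "prodinf f = exp S"
proof -
  have "raw_has_prod (\<lambda>i. exp (ln (f i))) 0 (exp S)" by (rule sums_imp_has_prod_exp[OF s])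
  moreover have "(\<lambda>i. exp (ln (f i))) = f" using pos by (intro ext) simp
  ultimately have "f has_prod exp S" by (simp add: has_prod_def)
  thus ?thesis by (rule has_prod_unique[symmetric])
qed

definition bf :: "real \<Rightarrow> nat \<Rightarrow> real" where
  "bf z k = (1 + z / real (Suc k)) ^ (Suc k) * exp (- z + z\<^sup>2 / (2 * real (Suc k)))"

lemma bf_ln:
  assumes "z > -1"
  shows "bf z k > 0 \<and> ln (bf z k) = real (Suc k) * ln (1 + z / real (Suc k)) + (- z + z\<^sup>2 / (2 * real (Suc k)))"
proof -
  have k1: "real (Suc k) \<ge> 1" by simp
  have "1 + z / real (Suc k) > 0"
  proof (cases "z \<ge> 0")
    case True
    hence "z / real (Suc k) \<ge> 0" by simp
    thus ?thesis by linarith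
  next
    case False
    have "z * real (Suc k) \<le> z * 1" using False k1 by (intro mult_left_mono_neg) auto
    hence "z \<le> z / real (Suc k)" by (simp add: le_divide_eq)
    thus ?thesis using assms by linarith
  qed
  define q where "q = 1 + z / real (Suc k)"
  define E where "E = - z + z\<^sup>2 / (2 * real (Suc k))"
  have q: "q > 0" using \<open>1 + z / real (Suc k) > 0\<close> by (simp add: q_def)
  have b: "bf z k = q ^ Suc k * exp E" by (simp add: bf_def q_def E_def)
  have qp: "q ^ Suc k > 0" using q by (rule zero_less_power)
  have "ln (q ^ Suc k * exp E) = ln (q ^ Suc k) + E" using qp q by (simp add: ln_mult)
  also have "ln (q ^ Suc k) = real (Suc k) * ln q" by (rule ln_realpow)
  finally have "ln (bf z k) = real (Suc k) * ln q + E" using b by simp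
  moreover have "bf z k > 0" using b qp by simp
  ultimately show ?thesis by (simp add: q_def E_def)
qed

lemma barnes_ln:
  assumes "z > -1" and s: "(\<lambda>k. ln (bf z k)) sums T"
  shows "barnesG (z + 1) > 0 \<and>
    ln (barnesG (z + 1)) = z / 2 * ln (2 * pi) - (z + (1 + euler_mascheroni) * z\<^sup>2) / 2 + T"
proof -
  have pos: "\<And>k. bf z k > 0" using bf_ln[OF assms(1)] by blast
  have "barnesG (z + 1) = (2 * pi) powr (z / 2) * exp (- (z + (1 + euler_mascheroni) * z\<^sup>2) / 2) * prodinf (bf z)"
    by (simp add: barnesG_def bf_def[abs_def])
  also have "prodinf (bf z) = exp T" by (rule prodinf_ln_sums[OF pos s])
  finally have e: "barnesG (z + 1) = (2 * pi) powr (z / 2) * exp (- (z + (1 + euler_mascheroni) * z\<^sup>2) / 2) * exp T" .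
  show ?thesis unfolding e by (simp add: ln_mult field_simps)
qed

definition dcf :: "real \<Rightarrow> nat \<Rightarrow> real" where
  "dcf y k = (let n = real (2 * k + 1) in
     ((1 - y / (n / 2)) / (1 + y / (n / 2))) powr (n / 2) * exp (2 * y))"

lemma dc_eq: "doubleCosine2 y = prodinf (dcf y)"
  by (simp add: doubleCosine2_def dcf_def[abs_def])

definition ell :: "real \<Rightarrow> nat \<Rightarrow> real" where
  "ell x k = real (2*k+1) / 2 * (ln (real (2*k+1) - x) - ln (real (2*k+1) + x)) + x"

lemma dcf_ln:
  assumes "0 \<le> x" "x < 1"
  shows "dcf (x/2) k > 0 \<and> ln (dcf (x/2) k) = ell x k"
proof -
  define n where "n = real (2 * k + 1)"
  have n1: "n \<ge> 1" by (simp add: n_def)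
  have p1: "n - x > 0" "n + x > 0" using n1 assms by auto
  have e: "(1 - (x/2) / (n / 2)) / (1 + (x/2) / (n / 2)) = (n - x) / (n + x)"
  proof -
    have e0: "(x/2) / (n/2) = x / n" by simp
    have e1: "1 - x/n = (n-x)/n" "1 + x/n = (n+x)/n" using n1 by (simp_all add: field_simps)
    have "((n-x)/n) / ((n+x)/n) = (n - x) / (n + x)" using n1 by simp
    thus ?thesis by (simp only: e0 e1)
  qed
  have "dcf (x/2) k = ((1 - (x/2) / (n / 2)) / (1 + (x/2) / (n / 2))) powr (n / 2) * exp (2 * (x/2))"
    unfolding dcf_def Let_def n_def by (rule refl)
  also have "\<dots> = ((n - x) / (n + x)) powr (n / 2) * exp x" by (simp only: e) simp
  finally have "dcf (x/2) k = ((n - x) / (n + x)) powr (n / 2) * exp x" .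
  hence d: "dcf (x/2) k > 0 \<and> ln (dcf (x/2) k) = n/2 * (ln (n - x) - ln (n + x)) + x"
    using p1 by (simp add: ln_mult ln_div)
  have "ell x k = n/2 * (ln (n - x) - ln (n + x)) + x" unfolding ell_def n_def by (rule refl)
  thus ?thesis using d by simp
qed



lemma ell_summable:
  assumes x: "0 \<le> x" "x < 1"
  shows "summable (ell x)"
proof (rule summable_comparison_test'[where N=1])
  show "summable (\<lambda>k. inverse (real k ^ 2))" by (rule inverse_power_summable) simp
  fix k :: nat assume k: "k \<ge> 1"
  define n where "n = real (2*k+1)"
  define v where "v = x / n"
  have n3: "n \<ge> 3" using k by (simp add: n_def)
  have v0: "0 \<le> v" using x n3 by (simp add: v_def)
  have vn: "v \<le> 1/n" using x n3 by (simp add: v_def divide_right_mono)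
  have "1/n < 1" using n3 by simp
  hence v1: "v < 1" using vn by linarith
  have h: "ln (n + x) - ln (n - x) = ln (1 + v) - ln (1 - v)"
  proof -
    have "n + x = n * (1 + v)" "n - x = n * (1 - v)" using n3 by (simp_all add: v_def field_simps)
    thus ?thesis using n3 v0 v1 by (simp add: ln_mult)
  qed
  have "ell x k = - (n/2) * (ln (n + x) - ln (n - x)) + x"
    unfolding ell_def n_def[symmetric] by (simp add: algebra_simps)
  hence ell: "ell x k = - (n/2) * (ln (1 + v) - ln (1 - v)) + x"
    by (simp only: h)
  have xv: "x = n * v" using n3 by (simp add: v_def)
  have up: "ell x k \<le> 0"
  proof -
    have "(n/2) * (2 * v) \<le> (n/2) * (ln (1 + v) - ln (1 - v))"
      using H1[OF v0 v1] n3 by (intro mult_left_mono) auto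
    thus ?thesis unfolding ell using xv by simp
  qed
  have lo: "- ell x k \<le> n/3 * (v^3 / (1 - v^2))"
  proof -
    have "(n/2) * (ln (1 + v) - ln (1 - v)) \<le> (n/2) * (2 * v + (2/3) * v^3 / (1 - v^2))"
      using H2[OF v0 v1] n3 by (intro mult_left_mono) auto
    thus ?thesis unfolding ell using xv by (simp add: algebra_simps)
  qed
  have v3: "v^3 \<le> (1/n)^3" using vn v0 by (rule power_mono)
  have vsq: "v^2 \<le> (1/n)^2" using vn v0 by (rule power_mono)
  have "(1/n)^2 \<le> (1/3)^2" using n3 by (intro power_mono) (auto simp: divide_le_eq)
  hence dd: "1/2 \<le> 1 - v^2" using vsq by (simp add: power2_eq_square)
  have "v^3 / (1 - v^2) \<le> (1/n)^3 / (1/2)"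
    by (rule frac_le) (use v3 dd n3 in auto)
  hence "n/3 * (v^3 / (1 - v^2)) \<le> n/3 * ((1/n)^3 / (1/2))"
    using n3 by (intro mult_left_mono) auto
  also have "\<dots> = 2 / (3 * n^2)" using n3 by (simp add: field_simps power2_eq_square power3_eq_cube)
  also have "\<dots> \<le> 1 / n^2" using n3 by (simp add: field_simps)
  also have "\<dots> \<le> inverse (real k ^ 2)"
  proof -
    have "real k ^ 2 \<le> n^2" using k by (intro power_mono) (auto simp: n_def)
    thus ?thesis using k by (simp add: inverse_eq_divide frac_le)
  qed
  finally have "- ell x k \<le> inverse (real k ^ 2)" using lo by linarith
  thus "norm (ell x k) \<le> inverse (real k ^ 2)" using up by simp
qed

lemma tau2_summable:
  assumes c: "0 < c" "c < 1"
  shows "summable (\<lambda>k. ln (bf c k))"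
proof (rule summable_comparison_test'[where N=1])
  show "summable (\<lambda>k. inverse (real k ^ 2))" by (rule inverse_power_summable) simp
  fix k :: nat assume k: "k \<ge> 1"
  define m where "m = real (Suc k)"
  define w where "w = c / m"
  have m1: "m \<ge> 1" by (simp add: m_def)
  have w0: "0 \<le> w" using c m1 by (simp add: w_def)
  have b: "ln (bf c k) = m * ln (1 + w) + (- c + c^2/(2*m))"
    using conjunct2[OF bf_ln[of c k]] c unfolding m_def w_def by simp
  have e1: "m * w = c" and e2: "m * (w^2/2) = c^2/(2*m)"
    using m1 by (simp_all add: w_def field_simps power2_eq_square)
  have "m * (ln (1 + w) - w + w^2 / 2) = m * ln (1 + w) - m * w + m * (w^2/2)"
    by (simp add: algebra_simps)
  hence t: "ln (bf c k) = m * (ln (1 + w) - w + w^2 / 2)" using b e1 e2 by linarith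
  have lo: "0 \<le> ln (bf c k)" unfolding t using I0[OF w0] m1 by simp
  have "ln (bf c k) \<le> m * (w^3 / 3)" unfolding t using I1[OF w0] m1 by (intro mult_left_mono) auto
  also have "\<dots> = c^3 / (3 * m^2)" using m1 by (simp add: w_def field_simps power2_eq_square power3_eq_cube)
  also have "\<dots> \<le> 1 / m^2"
  proof -
    have "c^3 \<le> 1" using c by (simp add: power_le_one)
    thus ?thesis using m1 by (simp add: field_simps)
  qed
  also have "\<dots> \<le> inverse (real k ^ 2)"
  proof -
    have "real k ^ 2 \<le> m^2" by (intro power_mono) (auto simp: m_def)
    thus ?thesis using k by (simp add: inverse_eq_divide frac_le)
  qed
  finally show "norm (ln (bf c k)) \<le> inverse (real k ^ 2)" using lo by simp
qed



definition Al :: "real \<Rightarrow> nat \<Rightarrow> real" where "Al x k = ln (real (2*k+1) - x)"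
definition Bl :: "real \<Rightarrow> nat \<Rightarrow> real" where "Bl x k = ln (real (2*k+1) + x)"

lemma tau1_form:
  assumes x: "0 \<le> x" "x < 1"
  shows "ln (bf (-((1+x)/2)) k) = real (Suc k) * (Al x k - ln (real (2*k+2))) + ((1+x)/2 + ((1+x)/2)^2 / (2 * real (Suc k)))"
proof -
  define c where "c = (1+x)/2"
  define m where "m = real (Suc k)"
  have c: "0 < c" "c < 1" using x by (auto simp: c_def)
  have m1: "m \<ge> 1" by (simp add: m_def)
  have "ln (bf (-c) k) = m * ln (1 + (-c) / m) + (- (-c) + (-c)^2 / (2 * m))"
    using conjunct2[OF bf_ln[of "-c" k]] c unfolding m_def by simp
  moreover have "1 + (-c) / m = (real (2*k+1) - x) / real (2*k+2)"
    using m1 by (simp add: m_def c_def field_simps)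
  moreover have "real (2*k+1) - x > 0" "real (2*k+2) > 0" using x by auto
  ultimately show ?thesis unfolding c_def[symmetric] m_def[symmetric] Al_def
    by (simp add: ln_div)
qed

lemma tau2_form:
  assumes x: "0 \<le> x" "x < 1"
  shows "ln (bf ((1+x)/2) k) = real (Suc k) * (Bl x (Suc k) - ln (real (2*k+2))) + (- ((1+x)/2) + ((1+x)/2)^2 / (2 * real (Suc k)))"
proof -
  define c where "c = (1+x)/2"
  define m where "m = real (Suc k)"
  have c: "0 < c" "c < 1" using x by (auto simp: c_def)
  have m1: "m \<ge> 1" by (simp add: m_def)
  have "ln (bf c k) = m * ln (1 + c / m) + (- c + c^2 / (2 * m))"
    using conjunct2[OF bf_ln[of c k]] c unfolding m_def by simp
  moreover have "1 + c / m = (real (2 * Suc k + 1) + x) / real (2*k+2)"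
    using m1 by (simp add: m_def c_def field_simps)
  moreover have "real (2 * Suc k + 1) + x > 0" "real (2*k+2) > 0" using x by auto
  ultimately show ?thesis unfolding c_def[symmetric] m_def[symmetric] Bl_def
    by (simp add: ln_div)
qed

lemma key_id:
  assumes x: "0 \<le> x" "x < 1"
  shows "(\<Sum>k<K. ln (bf (-((1+x)/2)) k) - ln (bf ((1+x)/2) k) - ell x k)
       = (\<Sum>k<K. (Al x k + Bl x k) / 2) - real K * Bl x K + real K"
proof (induction K)
  case 0 then show ?case by simp
next
  case (Suc K)
  have f: "ln (bf (-((1+x)/2)) K) - ln (bf ((1+x)/2) K) - ell x K
      = real (Suc K) * (Al x K - Bl x (Suc K)) + (1 + x) - real (2*K+1) / 2 * (Al x K - Bl x K) - x"
    unfolding tau1_form[OF x] tau2_form[OF x] ell_def Al_def[symmetric] Bl_def[symmetric]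
    by (simp add: algebra_simps)
  have "(\<Sum>k<Suc K. ln (bf (-((1+x)/2)) k) - ln (bf ((1+x)/2) k) - ell x k)
      = (\<Sum>k<K. (Al x k + Bl x k) / 2) - real K * Bl x K + real K
        + (real (Suc K) * (Al x K - Bl x (Suc K)) + (1 + x) - real (2*K+1) / 2 * (Al x K - Bl x K) - x)"
    using Suc f by simp
  also have "\<dots> = (\<Sum>k<Suc K. (Al x k + Bl x k) / 2) - real (Suc K) * Bl x (Suc K) + real (Suc K)"
    by (simp add: field_simps)
  finally show ?case .
qed



lemma W_eq:
  assumes x: "0 \<le> x" "x < 1" and K: "K \<ge> 1"
  shows "(\<Sum>k<K. ln (real (2*k+1))) - real K * Bl x K + real K
       = sS (2*K) - sS K + 1/2 * ln 2 - real K * ln (1 + ((1+x)/2) / real K)"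
proof -
  have K0: "real K > 0" using K by simp
  have b: "Bl x K = ln 2 + ln (real K) + ln (1 + ((1+x)/2) / real K)"
  proof -
    have "real (2*K+1) + x = 2 * real K * (1 + ((1+x)/2) / real K)"
      using K0 by (simp add: field_simps)
    moreover have "1 + ((1+x)/2) / real K > 0" using x K0 by (simp add: pos_add_strict)
    ultimately show ?thesis unfolding Bl_def using K0 by (simp add: ln_mult)
  qed
  have l2: "ln (real (2*K)) = ln 2 + ln (real K)"
    using K0 by (simp add: ln_mult)
  have s2: "sS (2*K) = LF (2*K) - (2 * real K + 1/2) * (ln 2 + ln (real K)) + 2 * real K"
    unfolding sS_def l2 by simp
  have s1: "sS K = LF K - (real K + 1/2) * ln (real K) + real K" unfolding sS_def by simp
  show ?thesis unfolding odd_ln_sum b s2 s1 by (simp add: algebra_simps)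
qed

lemma D_lim:
  assumes x: "0 \<le> x" "x < 1"
  shows "(\<lambda>K. (\<Sum>k<K. (Al x k + Bl x k) / 2) - real K * Bl x K + real K)
     \<longlonglongrightarrow> 1/2 * ln (cos (pi * x / 2)) + (1/2 * ln 2 - (1+x)/2)"
proof -
  define q where "q k = 1 - x^2 / (real (2*k+1))^2" for k
  have qpos: "q k > 0" for k
  proof -
    have "x * x < 1 * 1" using x by (intro mult_strict_mono') auto
    hence "x^2 < 1" by (simp add: power2_eq_square)
    also have "1 \<le> (real (2*k+1))^2" by simp
    finally have "x^2 / (real (2*k+1))^2 < 1" by simp
    thus ?thesis by (simp add: q_def)
  qed
  have pk: "(Al x k + Bl x k) / 2 = ln (real (2*k+1)) + 1/2 * ln (q k)" for k
  proof -
    define n where "n = real (2*k+1)"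
    have n1: "n \<ge> 1" by (simp add: n_def)
    have p: "n - x > 0" "n + x > 0" using n1 x by auto
    have qn: "q k = 1 - x^2 / n^2" by (simp add: q_def n_def)
    have "(n - x) * (n + x) = n^2 * (1 - x^2 / n^2)" using n1 by (simp add: field_simps power2_eq_square)
    hence "(n - x) * (n + x) = n^2 * q k" by (simp only: qn)
    hence "ln ((n - x) * (n + x)) = ln (n^2 * q k)" by simp
    moreover have "ln ((n - x) * (n + x)) = ln (n - x) + ln (n + x)" using p by (simp add: ln_mult)
    moreover have "ln (n^2 * q k) = ln (n^2) + ln (q k)" using n1 qpos[of k] by (simp add: ln_mult)
    moreover have "ln (n^2) = 2 * ln n" by (simp add: ln_realpow)
    ultimately have "ln (n - x) + ln (n + x) = 2 * ln n + ln (q k)" by simp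
    moreover have "Al x k = ln (n - x)" "Bl x k = ln (n + x)" "ln (real (2*k+1)) = ln n"
      unfolding Al_def Bl_def n_def by (rule refl)+
    ultimately show ?thesis by simp
  qed
  have dec: "(\<Sum>k<K. (Al x k + Bl x k) / 2) - real K * Bl x K + real K
      = 1/2 * ln (\<Prod>k<K. q k) + ((\<Sum>k<K. ln (real (2*k+1))) - real K * Bl x K + real K)" for K
  proof -
    have "ln (\<Prod>k<K. q k) = (\<Sum>k<K. ln (q k))"
    proof (rule ln_prod)
      show "finite {..<K}" by simp
      fix i show "q i \<noteq> 0" using qpos[of i] by simp
    qed
    thus ?thesis by (simp add: pk sum.distrib sum_distrib_left)
  qed
  have px: "0 \<le> pi * x" "pi * x < pi * 1" using x by (auto intro: mult_strict_left_mono)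
  have cpos: "cos (pi * x / 2) > 0" using px pi_gt_zero by (intro cos_gt_zero_pi) linarith+
  have L1: "(\<lambda>K. 1/2 * ln (\<Prod>k<K. q k)) \<longlonglongrightarrow> 1/2 * ln (cos (pi * x / 2))"
    using cos_prod[OF x] cpos unfolding q_def by (intro tendsto_intros) auto
  have L2: "(\<lambda>K. sS (2*K) - sS K + 1/2 * ln 2 - real K * ln (1 + ((1+x)/2) / real K))
       \<longlonglongrightarrow> 0 + 1/2 * ln 2 - (1+x)/2"
    using st_lim K_ln_lim[of "(1+x)/2"] x by (intro tendsto_intros) auto
  have L2': "(\<lambda>K. (\<Sum>k<K. ln (real (2*k+1))) - real K * Bl x K + real K) \<longlonglongrightarrow> 0 + 1/2 * ln 2 - (1+x)/2"
  proof (rule Lim_transform_eventually[OF L2])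
    show "\<forall>\<^sub>F K in sequentially. sS (2*K) - sS K + 1/2 * ln 2 - real K * ln (1 + ((1+x)/2) / real K)
        = (\<Sum>k<K. ln (real (2*k+1))) - real K * Bl x K + real K"
      using eventually_ge_at_top[of "1::nat"] by eventually_elim (metis W_eq[OF x])
  qed
  have "(\<lambda>K. 1/2 * ln (\<Prod>k<K. q k) + ((\<Sum>k<K. ln (real (2*k+1))) - real K * Bl x K + real K))
      \<longlonglongrightarrow> 1/2 * ln (cos (pi * x / 2)) + (0 + 1/2 * ln 2 - (1+x)/2)"
    by (rule tendsto_add[OF L1 L2'])
  thus ?thesis unfolding dec by simp
qed



theorem mainTheorem18:
  fixes x :: real
  assumes "0 \<le> x" and "x < 1"
  shows "ln (doubleCosine2 (x / 2)) =
    x / 2 * ln (2 * pi) + ln (sqrt pi) - 1 / 2 * ln (cos (pi * x / 2))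
    + ln (barnesG (1 / 2 - x / 2) / barnesG (3 / 2 + x / 2))"
proof -
  have x: "0 \<le> x" "x < 1" using assms by auto
  define c where "c = (1+x)/2"
  have c: "0 < c" "c < 1" using x by (auto simp: c_def)
  obtain SL where SL: "ell x sums SL" using ell_summable[OF x] by (auto simp: summable_def)
  obtain T2 where T2: "(\<lambda>k. ln (bf c k)) sums T2" using tau2_summable[OF c] by (auto simp: summable_def)
  define Dl where "Dl = 1/2 * ln (cos (pi * x / 2)) + (1/2 * ln 2 - (1+x)/2)"
  have T1: "(\<lambda>k. ln (bf (-c) k)) sums (Dl + SL + T2)"
  proof -
    have eq: "(\<Sum>k<K. ln (bf (-c) k)) = ((\<Sum>k<K. (Al x k + Bl x k) / 2) - real K * Bl x K + real K)
        + (\<Sum>k<K. ell x k) + (\<Sum>k<K. ln (bf c k))" for K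
    proof -
      have "(\<Sum>k<K. ln (bf (-c) k) - ln (bf c k) - ell x k) = (\<Sum>k<K. ln (bf (-c) k)) - (\<Sum>k<K. ln (bf c k)) - (\<Sum>k<K. ell x k)"
        by (simp add: sum_subtractf)
      moreover have "(\<Sum>k<K. ln (bf (-c) k) - ln (bf c k) - ell x k) = (\<Sum>k<K. (Al x k + Bl x k) / 2) - real K * Bl x K + real K"
        using key_id[OF x, of K] by (simp add: c_def)
      ultimately show ?thesis by linarith
    qed
    have "(\<lambda>K. ((\<Sum>k<K. (Al x k + Bl x k) / 2) - real K * Bl x K + real K)
        + (\<Sum>k<K. ell x k) + (\<Sum>k<K. ln (bf c k))) \<longlonglongrightarrow> Dl + SL + T2"
    proof -
      have a: "(\<lambda>K. \<Sum>k<K. ell x k) \<longlonglongrightarrow> SL" using SL by (simp add: sums_def)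
      have b: "(\<lambda>K. \<Sum>k<K. ln (bf c k)) \<longlonglongrightarrow> T2" using T2 by (simp add: sums_def)
      show ?thesis unfolding Dl_def by (rule tendsto_add[OF tendsto_add[OF D_lim[OF x] a] b])
    qed
    thus ?thesis unfolding sums_def eq .
  qed
  have dpos: "\<And>k. dcf (x/2) k > 0" using dcf_ln[OF x] by blast
  have "(\<lambda>k. ln (dcf (x/2) k)) = ell x" using dcf_ln[OF x] by (intro ext) blast
  hence "(\<lambda>k. ln (dcf (x/2) k)) sums SL" using SL by simp
  hence dc: "doubleCosine2 (x/2) = exp SL" unfolding dc_eq by (rule prodinf_ln_sums[OF dpos])
  have g1: "barnesG (- c + 1) > 0 \<and>
    ln (barnesG (- c + 1)) = - c / 2 * ln (2 * pi) - (- c + (1 + euler_mascheroni) * (- c)\<^sup>2) / 2 + (Dl + SL + T2)"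
    by (rule barnes_ln) (use c T1 in auto)
  have g2: "barnesG (c + 1) > 0 \<and>
    ln (barnesG (c + 1)) = c / 2 * ln (2 * pi) - (c + (1 + euler_mascheroni) * c\<^sup>2) / 2 + T2"
    by (rule barnes_ln) (use c T2 in auto)
  have a1: "- c + 1 = 1/2 - x/2" and a2: "c + 1 = 3/2 + x/2" by (simp_all add: c_def field_simps)
  have lnq: "ln (barnesG (1/2 - x/2) / barnesG (3/2 + x/2)) = ln (barnesG (- c + 1)) - ln (barnesG (c + 1))"
    using g1 g2 unfolding a1 a2 by (simp add: ln_div)
  have ls: "ln (sqrt pi) = ln pi / 2" by (simp add: ln_sqrt)
  have l2p: "ln (2 * pi) = ln 2 + ln pi" by (simp add: ln_mult)
  show ?thesis
    unfolding dc lnq ls using g1 g2 unfolding l2p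
    by (simp add: c_def Dl_def field_simps power2_eq_square)
qed


end
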